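(* Let $\mathcal C$ be a linear $[n,k]$ MDS code over $F$. Then $\mathcal C$ is $L$-MDS for every $L\in\mathbb Z^+$ with $L\ge\binom{n}{k}-k(n-k)$.
   Context: $F=\mathrm{GF}(q)$; $\mathsf w(\cdot)$ is Hamming weight. For $L\in\mathbb Z^+$ and nonnegative $\tau\in\frac{1}{L+1}\mathbb Z$, a code $\mathcal C\subseteq F^n$ is strongly-$(\tau,L)$-list decodable if there do not exist $y\in F^n$ and $L+1$ distinct codewords $c_0,\dots,c_L\in\mathcal C$ with $\sum_{m=0}^{L}\mathsf w(y-c_m)\le(L+1)\tau$. A linear $[n,k]$ code over $F$ is called $L$-MDS if it is strongly-$\left(\frac{L(n-k)}{L+1},L\right)$-list decodable; equivalently, any $L+1$ distinct vectors lying in a common coset of the code have total Hamming weight greater than $L(n-k)$. *)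

theory Defs
  imports "HOL-Analysis.Analysis"
begin

text \<open>Vectors of F^n are modelled as elements of type 'a^'n, where 'a is a finite
field (GF(q)) and n = CARD('n).\<close>

definition hweight :: "('a::zero)^'n \<Rightarrow> nat" where
  "hweight x = card {i. x $ i \<noteq> 0}"

definition linear_code :: "(('a::field)^'n) set \<Rightarrow> nat \<Rightarrow> bool" where
  "linear_code C k \<longleftrightarrow> vec.subspace C \<and> vec.dim C = k"

definition mds_code :: "(('a::field)^'n) set \<Rightarrow> nat \<Rightarrow> bool" where
  "mds_code C k \<longleftrightarrow> linear_code C k \<and>
     (\<forall>c\<in>C. c \<noteq> 0 \<longrightarrow> CARD('n) - k + 1 \<le> hweight c)"

definition strongly_list_decodable :: "(('a::ab_group_add)^'n) set \<Rightarrow> real \<Rightarrow> nat \<Rightarrow> bool" where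
  "strongly_list_decodable C \<tau> L \<longleftrightarrow>
     \<not> (\<exists>y c. (\<forall>m\<le>L. c m \<in> C) \<and> inj_on c {0..L} \<and>
            real (\<Sum>m=0..L. hweight (y - c m)) \<le> real (L + 1) * \<tau>)"

definition L_MDS :: "(('a::field)^'n) set \<Rightarrow> nat \<Rightarrow> nat \<Rightarrow> bool" where
  "L_MDS C k L \<longleftrightarrow> linear_code C k \<and>
     strongly_list_decodable C (real L * real (CARD('n) - k) / real (L + 1)) L"

end

theory Submission
  imports Defs
begin

lemma binom_lower:
  assumes "1 \<le> k" "k \<le> z"
  shows "1 + k * (z - k) \<le> z choose k"
  using assms(2)
proof (induction z rule: nat_induct_at_least)
  case base
  then show ?case by simp
next
  case (Suc z)
  obtain j where j: "k = Suc j" using assms(1) by (cases k) auto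
  have "Suc j choose j \<le> z choose j" using Suc(1) j binomial_right_mono[of "Suc j" z j] by simp
  hence "k \<le> z choose j" using j by simp
  moreover have "Suc z - k = Suc (z - k)" using Suc(1) by simp
  ultimately show ?case using Suc(2) j by simp
qed

lemma arith:
  fixes z :: "nat \<Rightarrow> nat"
  assumes k1: "1 \<le> k" and kn: "k \<le> n"
    and S: "(\<Sum>m=0..L. z m choose k) \<le> n choose k"
    and Lb: "int L \<ge> int (n choose k) - int k * int (n - k)"
  shows "(\<Sum>m=0..L. z m) + 1 \<le> n + L*k"
proof -
  define P where "P = {m\<in>{0..L}. k \<le> z m}"
  define N where "N = {m\<in>{0..L}. \<not> k \<le> z m}"
  define E where "E = (\<Sum>m\<in>P. z m - k)"
  have finP: "finite P" and finN: "finite N" unfolding P_def N_def by auto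
  have disj: "P \<inter> N = {}" and un: "{0..L} = P \<union> N" unfolding P_def N_def by auto
  have cardA: "card P + card N = L+1"
    using card_Un_disjoint[OF finP finN disj] un[symmetric] by simp
  have s1: "(\<Sum>m=0..L. z m) = (\<Sum>m\<in>P. z m) + (\<Sum>m\<in>N. z m)"
    using sum.union_disjoint[OF finP finN disj] un by simp
  have "(\<Sum>m\<in>P. z m) = (\<Sum>m\<in>P. (z m - k) + k)"
    by (rule sum.cong) (auto simp: P_def)
  hence s2: "(\<Sum>m\<in>P. z m) = E + card P * k" by (simp add: sum.distrib E_def)
  have s3: "(\<Sum>m\<in>N. z m) \<le> card N * (k-1)"
    using sum_bounded_above[of N z "k-1"] unfolding N_def by fastforce
  have "(\<Sum>m\<in>P. 1 + k * (z m - k)) \<le> (\<Sum>m\<in>P. z m choose k)"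
    by (rule sum_mono) (use binom_lower[OF k1] in \<open>auto simp: P_def\<close>)
  also have "\<dots> \<le> (\<Sum>m=0..L. z m choose k)"
    by (rule sum_mono2) (auto simp: P_def)
  moreover have "(\<Sum>m\<in>P. 1 + k * (z m - k)) = card P + k * E"
    by (simp only: sum.distrib E_def sum_distrib_left) simp
  ultimately have s4: "card P + k * E \<le> n choose k"
    using S by linarith
  have key: "card P + E \<le> n - k + L"
  proof (cases "E + 1 \<le> n - k")
    case True then show ?thesis using cardA by linarith
  next
    case False
    hence "n - k \<le> E" by simp
    hence "(k-1) * (n-k) \<le> (k-1) * E" by simp
    moreover have "k * E = E + (k-1) * E" using k1
      by (metis Suc_diff_le diff_Suc_1 mult_Suc le_refl add.commute)
    moreover have "k * (n-k) = (n-k) + (k-1)*(n-k)" using k1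
      by (metis Suc_diff_le diff_Suc_1 mult_Suc le_refl add.commute)
    moreover have "int (n choose k) \<le> int (L + k*(n-k))" using Lb by simp
    hence "n choose k \<le> L + k*(n-k)" by (simp only: of_nat_le_iff)
    ultimately show ?thesis using s4 by linarith
  qed
  obtain j where j: "k = Suc j" using k1 by (cases k) auto
  have "(L+1)*j = card P * j + card N * j" using cardA by (metis add_mult_distrib)
  hence e: "card P * k + card N * (k-1) = (L+1)*(k-1) + card P" using j by simp
  have "(L+1)*(k-1) + n - k + L + 1 = n + L*k" using k1 kn
    by (cases k) (auto simp: algebra_simps)
  thus ?thesis using s1 s2 s3 key e kn by linarith
qed

theorem mainTheorem12:
  fixes C :: "(('a::{field,finite})^'n) set" and k L :: nat
  assumes "mds_code C k"
    and "1 \<le> L"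
    and "int L \<ge> int (CARD('n) choose k) - int k * int (CARD('n) - k)"
  shows "L_MDS C k L"
proof -
  let ?n = "CARD('n)"
  have lin: "linear_code C k" and mds: "\<And>c. c \<in> C \<Longrightarrow> c \<noteq> 0 \<Longrightarrow> ?n - k + 1 \<le> hweight c"
    using assms(1) unfolding mds_code_def by auto
  have sub: "vec.subspace C" using lin unfolding linear_code_def by auto
  have hw_le: "hweight x \<le> ?n" for x :: "'a^'n"
    unfolding hweight_def by (rule card_mono) auto
  have hw0: "hweight x = 0 \<Longrightarrow> x = 0" for x :: "'a^'n"
    unfolding hweight_def by (auto simp: vec_eq_iff)
  have "\<not> (\<exists>y c. (\<forall>m\<le>L. c m \<in> C) \<and> inj_on c {0..L} \<and>
            real (\<Sum>m=0..L. hweight (y - c m)) \<le> real (L + 1) * (real L * real (?n - k) / real (L + 1)))"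
  proof
    assume "\<exists>y c. (\<forall>m\<le>L. c m \<in> C) \<and> inj_on c {0..L} \<and>
            real (\<Sum>m=0..L. hweight (y - c m)) \<le> real (L + 1) * (real L * real (?n - k) / real (L + 1))"
    then obtain y c where cC: "\<And>m. m \<le> L \<Longrightarrow> c m \<in> C" and inj: "inj_on c {0..L}"
      and le0: "real (\<Sum>m=0..L. hweight (y - c m)) \<le> real (L + 1) * (real L * real (?n - k) / real (L + 1))"
      by blast
    have "real (L + 1) * (real L * real (?n - k) / real (L + 1)) = real (L * (?n - k))"
      by simp
    with le0 have le: "(\<Sum>m=0..L. hweight (y - c m)) \<le> L * (?n - k)" by linarith
    have c01: "c 0 \<noteq> c 1" using inj assms(2) by (auto dest: inj_onD)
    show False
    proof (cases "?n \<le> k")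
      case True
      hence "(\<Sum>m=0..L. hweight (y - c m)) = 0" using le by simp
      hence "hweight (y - c 0) = 0" "hweight (y - c 1) = 0" using assms(2) by auto
      hence "y - c 0 = 0" "y - c 1 = 0" using hw0 by blast+
      thus False using c01 by (metis right_minus_eq)
    next
      case nk: False
      show False
      proof (cases "k = 0")
        case True
        have "c 0 - c 1 \<in> C" using cC assms(2) sub by (simp add: vec.subspace_diff)
        moreover have "c 0 - c 1 \<noteq> 0" using c01 by simp
        ultimately have "?n + 1 \<le> hweight (c 0 - c 1)" using mds True by fastforce
        thus False using hw_le[of "c 0 - c 1"] by simp
      next
        case False
        hence k1: "1 \<le> k" by simp
        define Z where "Z m = {i. (y - c m) $ i = 0}" for m
        define F where "F m = {S. S \<subseteq> Z m \<and> card S = k}" for m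
        have disj: False if "m \<le> L" "m' \<le> L" "m \<noteq> m'" "S \<subseteq> Z m" "S \<subseteq> Z m'" "card S = k" for m m' S
        proof -
          have "c m - c m' \<in> C" using cC that sub by (simp add: vec.subspace_diff)
          moreover have "c m - c m' \<noteq> 0" using inj that by (auto dest: inj_onD)
          ultimately have a: "?n - k + 1 \<le> hweight (c m - c m')" using mds by blast
          have "{i. (c m - c m') $ i \<noteq> 0} \<subseteq> UNIV - S"
          proof
            fix i assume i: "i \<in> {i. (c m - c m') $ i \<noteq> 0}"
            have "i \<notin> S"
            proof
              assume "i \<in> S"
              hence "(y - c m) $ i = 0" "(y - c m') $ i = 0" using that Z_def by auto
              hence "(c m - c m') $ i = 0" by (simp add: algebra_simps)
              with i show False by simp
            qed
            thus "i \<in> UNIV - S" by simp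
          qed
          hence "hweight (c m - c m') \<le> card (UNIV - S)"
            unfolding hweight_def by (rule card_mono[rotated]) auto
          also have "\<dots> = ?n - k" using that by (simp add: card_Diff_subset)
          finally show False using a by simp
        qed
        have cardF: "card (F m) = card (Z m) choose k" for m
          unfolding F_def by (rule n_subsets) simp
        have "(\<Sum>m=0..L. card (F m)) = card (\<Union>(F ` {0..L}))"
          by (rule card_UN_disjoint[symmetric]) (auto simp: F_def, metis disj)
        also have "\<dots> \<le> card {S. S \<subseteq> (UNIV::'n set) \<and> card S = k}"
          by (rule card_mono) (auto simp: F_def)
        also have "\<dots> = ?n choose k" by (rule n_subsets) simp
        finally have S: "(\<Sum>m=0..L. card (Z m) choose k) \<le> ?n choose k" by (simp add: cardF)
        have ar: "(\<Sum>m=0..L. card (Z m)) + 1 \<le> ?n + L*k"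
          using arith[of k ?n "\<lambda>m. card (Z m)" L] S assms(3) nk k1 by simp
        have hwZ: "hweight (y - c m) + card (Z m) = ?n" for m
        proof -
          have "{i. (y - c m) $ i \<noteq> 0} = UNIV - Z m" by (auto simp: Z_def)
          hence "hweight (y - c m) = card (UNIV - Z m)" by (simp add: hweight_def)
          also have "\<dots> = ?n - card (Z m)" by (simp add: card_Diff_subset)
          finally show ?thesis using card_mono[of UNIV "Z m"] by simp
        qed
        have "(\<Sum>m=0..L. hweight (y - c m)) + (\<Sum>m=0..L. card (Z m)) = (L+1) * ?n"
          by (simp add: sum.distrib[symmetric] hwZ)
        moreover have "L * (?n - k) + L * k = L * ?n" using nk
          by (simp add: diff_mult_distrib2)
        moreover have "(L+1) * ?n = L * ?n + ?n" by simp
        ultimately show False using le ar by linarith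
      qed
    qed
  qed
  thus ?thesis unfolding L_MDS_def strongly_list_decodable_def using lin by blast
qed

end
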